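(* Let $\mathbf{T}$ be a $\sigma$-structure, $\mathbf{A}$ an instance of $\mathrm{CSP}(\mathbf{T})$, $\mathbb{F}$ a field, $D\ge1$, and $R$ a degree-$D$ pseudo-reduction operator for $P_{\mathbf{A}\to\mathbf{T}}$. Then for every $k\le D$ the collection $\kappa_R=\{\kappa_R(X):X\subseteq A,|X|\le k\}$, where $\kappa_R(X)=\{\varphi\in\mathrm{Hom}(\mathbf{A}[X],\mathbf{T}):R(m_\varphi)\ne0\}$, is $k$-consistent with all $\kappa_R(X)$ nonempty. Moreover, if $\mathbb{F}$ has characteristic $0$ and $R$ is integral, then for every $\mathbb{Z}$-linear map $h:\mathbb{Z}[\mathbf{x}_{A,T}]\to\mathbb{Z}$ with $h(1)=1$, the assignment $x_{X,\varphi}:=h(R(m_\varphi))$ for all $X\subseteq A$ with $|X|\le D$ and $\varphi\in\mathrm{Hom}(\mathbf{A}[X],\mathbf{T})$ is an integer solution of $L_D(\mathbf{A},\mathbf{T},\kappa_R)$ (and, restricted to $|X|\le k$, of $L_k(\mathbf{A},\mathbf{T},\kappa_R)$ for all $k\le D$). Consequently, if a degree-$D$ integral pseudo-reduction operator for $P_{\mathbf{A}\to\mathbf{T}}$ exists, the $\mathbb{Z}$-affine $k$-consistency algorithm for $\mathrm{CSP}(\mathbf{T})$ accepts $\mathbf{A}$ for all $k\le D$.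
   Context: Relational structures: a signature $\sigma$ is a finite set of relation symbols with arities; a $\sigma$-structure $\mathbf{A}$ has a finite domain $A$ and relations $\Gamma^{\mathbf{A}}\subseteq A^{\mathrm{ar}(\Gamma)}$; a homomorphism maps tuples of $\Gamma^{\mathbf{A}}$ into $\Gamma^{\mathbf{T}}$. An instance of $\mathrm{CSP}(\mathbf{T})$ is a $\sigma$-structure no tuple of whose relations has repeated entries. For $X\subseteq A$, $\mathbf{A}[X]$ is the substructure on $X$ (tuples with all entries in $X$), and $\mathrm{Hom}(\mathbf{A}[X],\mathbf{T})$ its set of homomorphisms to $\mathbf{T}$. Polynomial encoding: $\mathbb{F}[\mathbf{x}_{A,T}]$ is the polynomial ring in variables $x_{a,i}$ ($a\in A,i\in T$). $P_{\mathbf{A}\to\mathbf{T}}$ consists of: $\sum_{i\in T}x_{a,i}-1$ for $a\in A$; $x_{a,i}x_{a,i'}$ for $a\in A$, $i\ne i'$; for each $\Gamma\in\sigma$, $(a_1,\dots,a_r)\in\Gamma^{\mathbf{A}}$ and $(c_1,\dots,c_r)\in T^r\setminus\Gamma^{\mathbf{T}}$, the monomial $\prod_jx_{a_j,c_j}$; and $x_{a,i}^2-x_{a,i}$. For a partial map $\varphi:A\to T$, $m_\varphi=\prod_{a\in\mathrm{dom}\varphi}x_{a,\varphi(a)}$ (so $m_\emptyset=1$). A degree-$D$ pseudo-reduction operator for a set $\mathcal{P}\subseteq\mathbb{F}[x_1,\dots,x_n]$ is an $\mathbb{F}$-linear map $R$ on $\mathbb{F}[x_1,\dots,x_n]$ with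 (1) $R(1)=1$, (2) $R(p)=0$ for all $p\in\mathcal{P}$, (3) $R(x_im)=R(x_iR(m))$ for every monomial $m$ of degree at most $D-1$ and every variable $x_i$. When $\mathbb{F}$ has characteristic $0$ (so $\mathbb{Z}\subseteq\mathbb{F}$), $R$ is integral if $R(m)\in\mathbb{Z}[x_1,\dots,x_n]$ for every monomial $m$. $k$-consistency: a collection $\kappa=\{\kappa(X):X\subseteq A,|X|\le k\}$ with $\kappa(X)\subseteq\mathrm{Hom}(\mathbf{A}[X],\mathbf{T})$ is $k$-consistent if for all $Y\subseteq X$, $|X|\le k$: every $\varphi\in\kappa(Y)$ is the restriction of some $\psi\in\kappa(X)$, and every $\psi\in\kappa(X)$ restricts to an element of $\kappa(Y)$. $L_k(\mathbf{A},\mathbf{T},\kappa)$ is the system in variables $x_{X,\varphi}$ ($|X|\le k$, $\varphi\in\mathrm{Hom}(\mathbf{A}[X],\mathbf{T})$): $\sum_{\varphi\in\kappa(X)}x_{X,\varphi}=1$ for each $|X|\le k$, and $\sum_{\varphi\in\kappa(X),\varphi|_Y=\psi}x_{X,\varphi}=x_{Y,\psi}$ for all $Y\subseteq X$, $|X|\le k$, $\psi\in\kappa(Y)$. The $\mathbb{Z}$-affine $k$-consistency algorithm for $\mathrm{CSP}(\mathbf{T})$ accepts $\mathbf{A}$ iff there is a $k$-consistent collection $\kappa$ with all $\kappa(X)$ nonempty such that $L_k(\mathbf{A},\mathbf{T},\kappa)$ has a solution over $\mathbb{Z}$. *)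

theory Defs
  imports Main "HOL-Library.Poly_Mapping"
begin

definition is_structure :: "'s set \<Rightarrow> ('s \<Rightarrow> nat) \<Rightarrow> 'a set \<Rightarrow> ('s \<Rightarrow> 'a list set) \<Rightarrow> bool" where
  "is_structure sig ar A RA \<longleftrightarrow> finite sig \<and> finite A \<and>
     (\<forall>\<Gamma>\<in>sig. \<forall>t\<in>RA \<Gamma>. length t = ar \<Gamma> \<and> set t \<subseteq> A)"

definition is_instance :: "'s set \<Rightarrow> ('s \<Rightarrow> nat) \<Rightarrow> 'a set \<Rightarrow> ('s \<Rightarrow> 'a list set) \<Rightarrow> bool" where
  "is_instance sig ar A RA \<longleftrightarrow> is_structure sig ar A RA \<and> (\<forall>\<Gamma>\<in>sig. \<forall>t\<in>RA \<Gamma>. distinct t)"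

text \<open>Hom(A[X],T): partial maps with domain exactly X, values in T, mapping every tuple of
  the substructure A[X] (tuples with all entries in X) into the corresponding relation of T.\<close>
definition Hom_sub :: "'s set \<Rightarrow> 'a set \<Rightarrow> ('s \<Rightarrow> 'a list set) \<Rightarrow> 'a set
                       \<Rightarrow> 't set \<Rightarrow> ('s \<Rightarrow> 't list set) \<Rightarrow> ('a \<rightharpoonup> 't) set" where
  "Hom_sub sig A RA X T RT = {\<phi>. dom \<phi> = X \<and> ran \<phi> \<subseteq> T \<and>
      (\<forall>\<Gamma>\<in>sig. \<forall>t\<in>RA \<Gamma>. set t \<subseteq> X \<longrightarrow> map (\<lambda>a. the (\<phi> a)) t \<in> RT \<Gamma>)}"

type_synonym ('v, 'f) mpoly = "('v \<Rightarrow>\<^sub>0 nat) \<Rightarrow>\<^sub>0 'f"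

definition Var :: "'v \<Rightarrow> ('v, 'f::comm_ring_1) mpoly" where
  "Var v = Poly_Mapping.single (Poly_Mapping.single v 1) 1"

definition Const :: "'f::comm_ring_1 \<Rightarrow> ('v, 'f) mpoly" where
  "Const c = Poly_Mapping.single 0 c"

definition polys_in :: "'v set \<Rightarrow> ('v, 'f::comm_ring_1) mpoly set" where
  "polys_in V = {p. \<forall>e\<in>Poly_Mapping.keys p. Poly_Mapping.keys e \<subseteq> V}"

definition mdeg :: "('v \<Rightarrow>\<^sub>0 nat) \<Rightarrow> nat" where
  "mdeg e = (\<Sum>v\<in>Poly_Mapping.keys e. Poly_Mapping.lookup e v)"

definition mono :: "('v \<Rightarrow>\<^sub>0 nat) \<Rightarrow> ('v, 'f::comm_ring_1) mpoly" where
  "mono e = Poly_Mapping.single e 1"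

definition m_map :: "('a \<rightharpoonup> 't) \<Rightarrow> ('a \<times> 't, 'f::comm_ring_1) mpoly" where
  "m_map \<phi> = (\<Prod>a\<in>dom \<phi>. Var (a, the (\<phi> a)))"

definition P_enc :: "'s set \<Rightarrow> ('s \<Rightarrow> nat) \<Rightarrow> 'a set \<Rightarrow> ('s \<Rightarrow> 'a list set) \<Rightarrow> 't set
                     \<Rightarrow> ('s \<Rightarrow> 't list set) \<Rightarrow> ('a \<times> 't, 'f::comm_ring_1) mpoly set" where
  "P_enc sig ar A RA T RT =
     {(\<Sum>i\<in>T. Var (a, i)) - 1 | a. a \<in> A}
   \<union> {Var (a, i) * Var (a, i') | a i i'. a \<in> A \<and> i \<in> T \<and> i' \<in> T \<and> i \<noteq> i'}
   \<union> {(\<Prod>j<ar \<Gamma>. Var (t ! j, c ! j)) | \<Gamma> t c. \<Gamma> \<in> sig \<and> t \<in> RA \<Gamma> \<and>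
        length c = ar \<Gamma> \<and> set c \<subseteq> T \<and> c \<notin> RT \<Gamma>}
   \<union> {Var (a, i) ^ 2 - Var (a, i) | a i. a \<in> A \<and> i \<in> T}"

definition pseudo_reduction ::
  "nat \<Rightarrow> 'v set \<Rightarrow> ('v, 'f::field) mpoly set \<Rightarrow> (('v, 'f) mpoly \<Rightarrow> ('v, 'f) mpoly) \<Rightarrow> bool" where
  "pseudo_reduction D V P R \<longleftrightarrow>
     (\<forall>p\<in>polys_in V. R p \<in> polys_in V) \<and>
     (\<forall>p\<in>polys_in V. \<forall>q\<in>polys_in V. R (p + q) = R p + R q) \<and>
     (\<forall>c. \<forall>p\<in>polys_in V. R (Const c * p) = Const c * R p) \<and>
     R 1 = 1 \<and>
     (\<forall>p\<in>P. R p = 0) \<and>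
     (\<forall>e v. Poly_Mapping.keys e \<subseteq> V \<and> mdeg e \<le> D - 1 \<and> v \<in> V \<longrightarrow>
        R (Var v * mono e) = R (Var v * R (mono e)))"

definition integral_op :: "'v set \<Rightarrow> (('v, 'f::field) mpoly \<Rightarrow> ('v, 'f) mpoly) \<Rightarrow> bool" where
  "integral_op V R \<longleftrightarrow> (\<forall>e. Poly_Mapping.keys e \<subseteq> V \<longrightarrow>
      (\<forall>m\<in>Poly_Mapping.keys (R (mono e)). Poly_Mapping.lookup (R (mono e)) m \<in> \<int>))"

text \<open>The integer polynomial corresponding to an F-polynomial with integer coefficients
  (well defined when F has characteristic 0).\<close>
definition to_int_poly :: "('v, 'f::field) mpoly \<Rightarrow> ('v, int) mpoly" where
  "to_int_poly p = Poly_Mapping.map (\<lambda>c. THE i::int. of_int i = c) p"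

definition Z_linear_on :: "'v set \<Rightarrow> (('v, int) mpoly \<Rightarrow> int) \<Rightarrow> bool" where
  "Z_linear_on V h \<longleftrightarrow>
     (\<forall>p\<in>polys_in V. \<forall>q\<in>polys_in V. h (p + q) = h p + h q) \<and>
     (\<forall>c. \<forall>p\<in>polys_in V. h (Const c * p) = c * h p)"

definition k_consistent :: "'s set \<Rightarrow> 'a set \<Rightarrow> ('s \<Rightarrow> 'a list set) \<Rightarrow> 't set \<Rightarrow> ('s \<Rightarrow> 't list set)
                          \<Rightarrow> nat \<Rightarrow> ('a set \<Rightarrow> ('a \<rightharpoonup> 't) set) \<Rightarrow> bool" where
  "k_consistent sig A RA T RT k \<kappa> \<longleftrightarrow>
     (\<forall>X. X \<subseteq> A \<and> card X \<le> k \<longrightarrow> \<kappa> X \<subseteq> Hom_sub sig A RA X T RT) \<and>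
     (\<forall>X Y. X \<subseteq> A \<and> card X \<le> k \<and> Y \<subseteq> X \<longrightarrow>
        (\<forall>\<phi>\<in>\<kappa> Y. \<exists>\<psi>\<in>\<kappa> X. \<psi> |` Y = \<phi>) \<and>
        (\<forall>\<psi>\<in>\<kappa> X. \<psi> |` Y \<in> \<kappa> Y))"

text \<open>x is an integer solution of L_k(A,T,kappa); x X phi is the value of the variable x_{X,phi}.\<close>
definition L_solution :: "'s set \<Rightarrow> 'a set \<Rightarrow> ('s \<Rightarrow> 'a list set) \<Rightarrow> 't set \<Rightarrow> ('s \<Rightarrow> 't list set)
                        \<Rightarrow> nat \<Rightarrow> ('a set \<Rightarrow> ('a \<rightharpoonup> 't) set) \<Rightarrow> ('a set \<Rightarrow> ('a \<rightharpoonup> 't) \<Rightarrow> int) \<Rightarrow> bool" where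
  "L_solution sig A RA T RT k \<kappa> x \<longleftrightarrow>
     (\<forall>X. X \<subseteq> A \<and> card X \<le> k \<longrightarrow> (\<Sum>\<phi>\<in>\<kappa> X. x X \<phi>) = 1) \<and>
     (\<forall>X Y. X \<subseteq> A \<and> card X \<le> k \<and> Y \<subseteq> X \<longrightarrow>
        (\<forall>\<psi>\<in>\<kappa> Y. (\<Sum>\<phi>\<in>{\<phi>\<in>\<kappa> X. \<phi> |` Y = \<psi>}. x X \<phi>) = x Y \<psi>))"

definition Zaffine_accepts :: "'s set \<Rightarrow> 'a set \<Rightarrow> ('s \<Rightarrow> 'a list set) \<Rightarrow> 't set \<Rightarrow> ('s \<Rightarrow> 't list set)
                              \<Rightarrow> nat \<Rightarrow> bool" where
  "Zaffine_accepts sig A RA T RT k \<longleftrightarrow>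
     (\<exists>\<kappa>. k_consistent sig A RA T RT k \<kappa> \<and>
          (\<forall>X. X \<subseteq> A \<and> card X \<le> k \<longrightarrow> \<kappa> X \<noteq> {}) \<and>
          (\<exists>x. L_solution sig A RA T RT k \<kappa> x))"

definition kappa_R :: "'s set \<Rightarrow> 'a set \<Rightarrow> ('s \<Rightarrow> 'a list set) \<Rightarrow> 't set \<Rightarrow> ('s \<Rightarrow> 't list set)
                      \<Rightarrow> (('a \<times> 't, 'f::field) mpoly \<Rightarrow> ('a \<times> 't, 'f) mpoly) \<Rightarrow> 'a set \<Rightarrow> ('a \<rightharpoonup> 't) set" where
  "kappa_R sig A RA T RT R X = {\<phi>\<in>Hom_sub sig A RA X T RT. R (m_map \<phi>) \<noteq> 0}"

end

theory Submission
  imports Defs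
begin


lemma polys_in_add: "p \<in> polys_in V \<Longrightarrow> q \<in> polys_in V \<Longrightarrow> p + q \<in> polys_in V"
  unfolding polys_in_def by (auto dest: subsetD[OF keys_add])

lemma polys_in_zero: "0 \<in> polys_in V" by (simp add: polys_in_def)
lemma polys_in_one: "1 \<in> polys_in V" by (simp add: polys_in_def)

lemma polys_in_sum: "(\<And>i. i \<in> I \<Longrightarrow> f i \<in> polys_in V) \<Longrightarrow> sum f I \<in> polys_in V"
  by (induction I rule: infinite_finite_induct) (auto simp: polys_in_zero polys_in_add)

lemma keys_add_nat: "Poly_Mapping.keys (a + (b :: 'v \<Rightarrow>\<^sub>0 nat)) = Poly_Mapping.keys a \<union> Poly_Mapping.keys b"
  by (auto simp: in_keys_iff lookup_add)

lemma polys_in_mult: "p \<in> polys_in V \<Longrightarrow> q \<in> polys_in V \<Longrightarrow> p * q \<in> polys_in V"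
  unfolding polys_in_def using keys_mult[of p q] by (force simp: keys_add_nat)

lemma polys_in_Var: "v \<in> V \<Longrightarrow> Var v \<in> polys_in V"
  by (simp add: polys_in_def Var_def)

lemma Const_mult_neg: "Const (-1) * p = - p"
  by (simp add: Const_def single_uminus)

definition mon :: "'v list \<Rightarrow> ('v, 'f::comm_ring_1) mpoly" where
  "mon vs = prod_list (map Var vs)"

definition expv :: "'v list \<Rightarrow> ('v \<Rightarrow>\<^sub>0 nat)" where
  "expv vs = sum_list (map (\<lambda>v. Poly_Mapping.single v 1) vs)"

lemma mon_expv: "mon vs = mono (expv vs)"
  by (induction vs) (auto simp: mon_def expv_def mono_def Var_def mult_single)

lemma keys_expv: "Poly_Mapping.keys (expv vs) = set vs"
  by (induction vs) (auto simp: expv_def keys_add_nat)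

lemma mdeg_sup: "finite S \<Longrightarrow> Poly_Mapping.keys e \<subseteq> S \<Longrightarrow> mdeg e = (\<Sum>v\<in>S. Poly_Mapping.lookup e v)"
  unfolding mdeg_def by (rule sum.mono_neutral_left) (auto simp: in_keys_iff)

lemma mdeg_expv: "mdeg (expv vs) = length vs"
proof (induction vs)
  case Nil then show ?case by (simp add: expv_def mdeg_def)
next
  case (Cons v vs)
  have e: "expv (v # vs) = Poly_Mapping.single v 1 + expv vs" by (simp add: expv_def)
  let ?S = "insert v (set vs)"
  have "mdeg (expv (v # vs)) = (\<Sum>w\<in>?S. Poly_Mapping.lookup (expv (v # vs)) w)"
    by (rule mdeg_sup) (auto simp: keys_expv)
  also have "\<dots> = (\<Sum>w\<in>?S. Poly_Mapping.lookup (Poly_Mapping.single v 1) w) + (\<Sum>w\<in>?S. Poly_Mapping.lookup (expv vs) w)"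
    by (simp add: e lookup_add sum.distrib)
  also have "(\<Sum>w\<in>?S. Poly_Mapping.lookup (expv vs) w) = mdeg (expv vs)"
    by (rule mdeg_sup[symmetric]) (auto simp: keys_expv)
  also have "(\<Sum>w\<in>?S. Poly_Mapping.lookup (Poly_Mapping.single v 1) w) = (1::nat)"
    by (simp add: lookup_single when_def sum.delta)
  finally show ?case using Cons by simp
qed

lemma mon_polys_in: "set vs \<subseteq> V \<Longrightarrow> mon vs \<in> polys_in V"
  by (induction vs) (auto simp: mon_def polys_in_one polys_in_mult polys_in_Var)

lemma mon_append: "mon (vs @ ws) = mon vs * mon ws"
  by (simp add: mon_def)

lemma prod_list_nth: "prod_list (map f xs) = (\<Prod>j<length xs. f (xs ! j))"
  by (induction xs) (simp_all add: prod.lessThan_Suc_shift del: prod.lessThan_Suc)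

definition pairs :: "('a \<rightharpoonup> 't) \<Rightarrow> 'a list \<Rightarrow> ('a \<times> 't) list" where
  "pairs \<phi> xs = map (\<lambda>a. (a, the (\<phi> a))) xs"

lemma m_map_mon: "distinct xs \<Longrightarrow> set xs = dom \<phi> \<Longrightarrow> m_map \<phi> = mon (pairs \<phi> xs)"
  unfolding m_map_def mon_def pairs_def
  by (simp add: prod.distinct_set_conv_list[symmetric] o_def)



locale prctx =
  fixes sig :: "'s set" and ar :: "'s \<Rightarrow> nat"
    and A :: "'a set" and RA :: "'s \<Rightarrow> 'a list set"
    and T :: "'t set" and RT :: "'s \<Rightarrow> 't list set"
    and D :: nat
    and R :: "('a \<times> 't, 'f::field) mpoly \<Rightarrow> ('a \<times> 't, 'f) mpoly"
  assumes T_struct: "is_structure sig ar T RT"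
    and A_inst: "is_instance sig ar A RA"
    and D_pos: "D \<ge> 1"
    and R_pr: "pseudo_reduction D (A \<times> T) (P_enc sig ar A RA T RT) R"
begin

abbreviation "V \<equiv> A \<times> T"

lemma finT: "finite T" using T_struct by (simp add: is_structure_def)
lemma finA: "finite A" using A_inst by (simp add: is_instance_def is_structure_def)

lemma R_closed: "p \<in> polys_in V \<Longrightarrow> R p \<in> polys_in V"
  using R_pr by (simp add: pseudo_reduction_def)
lemma R_add: "p \<in> polys_in V \<Longrightarrow> q \<in> polys_in V \<Longrightarrow> R (p + q) = R p + R q"
  using R_pr by (simp add: pseudo_reduction_def)
lemma R_Const: "p \<in> polys_in V \<Longrightarrow> R (Const c * p) = Const c * R p"
  using R_pr by (simp add: pseudo_reduction_def)
lemma R_one: "R 1 = 1"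
  using R_pr by (simp add: pseudo_reduction_def)
lemma R_P: "p \<in> P_enc sig ar A RA T RT \<Longrightarrow> R p = 0"
  using R_pr by (simp add: pseudo_reduction_def)
lemma R_red: "Poly_Mapping.keys e \<subseteq> V \<Longrightarrow> mdeg e \<le> D - 1 \<Longrightarrow> v \<in> V \<Longrightarrow>
    R (Var v * mono e) = R (Var v * R (mono e))"
  using R_pr unfolding pseudo_reduction_def by blast

lemma R_zero: "R 0 = 0"
  using R_add[OF polys_in_zero polys_in_zero] by simp

lemma R_neg: "p \<in> polys_in V \<Longrightarrow> R (- p) = - R p"
  using R_Const[of p "-1"] by (simp add: Const_mult_neg)

lemma polys_in_neg: "p \<in> polys_in V \<Longrightarrow> - p \<in> polys_in V"
  by (simp add: polys_in_def)

lemma R_diff: "p \<in> polys_in V \<Longrightarrow> q \<in> polys_in V \<Longrightarrow> R (p - q) = R p - R q"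
  using R_add[of p "-q"] R_neg[of q] polys_in_neg[of q] by simp

lemma R_sum: "(\<And>i. i \<in> I \<Longrightarrow> f i \<in> polys_in V) \<Longrightarrow> R (sum f I) = (\<Sum>i\<in>I. R (f i))"
proof (induction I rule: infinite_finite_induct)
  case (infinite A) then show ?case by (simp add: R_zero)
next
  case empty then show ?case by (simp add: R_zero)
next
  case (insert x F)
  then show ?case by (simp add: R_add polys_in_sum)
qed

lemma R_mon_Cons: "set (v # vs) \<subseteq> V \<Longrightarrow> length vs \<le> D - 1 \<Longrightarrow>
    R (mon (v # vs)) = R (Var v * R (mon vs))"
  using R_red[of "expv vs" v] by (simp add: mon_expv[symmetric] keys_expv mdeg_expv, simp add: mon_def)

lemma zero_prop: "set vs \<union> set ws \<subseteq> V \<Longrightarrow> length vs + length ws \<le> D \<Longrightarrow> R (mon ws) = 0 \<Longrightarrow>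
   R (mon (vs @ ws)) = 0"
proof (induction vs)
  case Nil then show ?case by simp
next
  case (Cons v vs)
  have "R (mon (v # (vs @ ws))) = R (Var v * R (mon (vs @ ws)))"
    using Cons.prems by (intro R_mon_Cons) auto
  also have "R (mon (vs @ ws)) = 0" using Cons by auto
  finally show ?case by (simp add: R_zero)
qed

lemma sum_split: "set vs \<subseteq> V \<Longrightarrow> length vs \<le> D - 1 \<Longrightarrow> a \<in> A \<Longrightarrow>
    (\<Sum>i\<in>T. R (mon (vs @ [(a, i)]))) = R (mon vs)"
proof (induction vs)
  case Nil
  have "(\<Sum>i\<in>T. Var (a, i)) - 1 \<in> P_enc sig ar A RA T RT"
    using Nil unfolding P_enc_def by blast
  then have "R ((\<Sum>i\<in>T. Var (a, i)) - 1) = 0" by (rule R_P)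
  moreover have "(\<Sum>i\<in>T. Var (a, i)) \<in> polys_in V"
    using Nil by (intro polys_in_sum polys_in_Var) auto
  ultimately have "R (\<Sum>i\<in>T. Var (a, i)) = R 1"
    using R_diff[OF _ polys_in_one] by (metis eq_iff_diff_eq_0)
  moreover have "R (\<Sum>i\<in>T. Var (a, i)) = (\<Sum>i\<in>T. R (Var (a, i)))"
    using Nil by (intro R_sum polys_in_Var) auto
  ultimately show ?case by (simp add: mon_def)
next
  case (Cons v vs)
  have "(\<Sum>i\<in>T. R (mon (v # vs @ [(a, i)]))) = (\<Sum>i\<in>T. R (Var v * R (mon (vs @ [(a, i)]))))"
    using Cons.prems by (intro sum.cong refl R_mon_Cons) auto
  also have "\<dots> = R (\<Sum>i\<in>T. Var v * R (mon (vs @ [(a, i)])))"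
    using Cons.prems by (intro R_sum[symmetric] polys_in_mult polys_in_Var R_closed mon_polys_in) auto
  also have "\<dots> = R (Var v * (\<Sum>i\<in>T. R (mon (vs @ [(a, i)]))))"
    by (simp add: sum_distrib_left)
  also have "(\<Sum>i\<in>T. R (mon (vs @ [(a, i)]))) = R (mon vs)"
    using Cons by auto
  also have "R (Var v * R (mon vs)) = R (mon (v # vs))"
    using Cons.prems by (intro R_mon_Cons[symmetric]) auto
  finally show ?case by simp
qed

end


definition ext :: "'t set \<Rightarrow> ('a \<rightharpoonup> 't) \<Rightarrow> 'a set \<Rightarrow> ('a \<rightharpoonup> 't) set" where
  "ext T \<phi> X = {\<psi>. dom \<psi> = X \<and> ran \<psi> \<subseteq> T \<and> \<psi> |` dom \<phi> = \<phi>}"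

lemma fin_ext: "finite X \<Longrightarrow> finite T \<Longrightarrow> finite (ext T \<phi> X)"
  by (rule finite_subset[OF _ finite_set_of_finite_maps[of X T]]) (auto simp: ext_def)

lemma the_in_ran: "b \<in> dom \<psi> \<Longrightarrow> ran \<psi> \<subseteq> T \<Longrightarrow> the (\<psi> b) \<in> T"
  by (auto simp: ran_def dom_def)

lemma restrict_dom_self: "\<psi> |` dom \<psi> = \<psi>"
  by (auto simp: fun_eq_iff restrict_map_def dom_def)

lemma pairs_cong: "(\<And>a. a \<in> set xs \<Longrightarrow> \<phi> a = \<psi> a) \<Longrightarrow> pairs \<phi> xs = pairs \<psi> xs"
  by (simp add: pairs_def)

lemma pairs_in: "set xs \<subseteq> dom \<psi> \<Longrightarrow> dom \<psi> \<subseteq> A \<Longrightarrow> ran \<psi> \<subseteq> T \<Longrightarrow> set (pairs \<psi> xs) \<subseteq> A \<times> T"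
  by (auto simp: pairs_def intro: the_in_ran)

context prctx
begin

lemma ext_sum:
  assumes "finite S" "S \<subseteq> A" "S \<inter> dom \<phi> = {}" "dom \<phi> \<subseteq> A" "ran \<phi> \<subseteq> T" "card (dom \<phi> \<union> S) \<le> D"
  shows "R (m_map \<phi>) = (\<Sum>\<psi>\<in>ext T \<phi> (dom \<phi> \<union> S). R (m_map \<psi>))"
  using assms
proof (induction S rule: finite_induct)
  case empty
  have "ext T \<phi> (dom \<phi>) = {\<phi>}"
    using empty restrict_dom_self by (auto simp: ext_def) (metis restrict_dom_self)+
  then show ?case by simp
next
  case (insert a S)
  let ?X = "dom \<phi> \<union> S"
  have "finite (dom \<phi>)" using insert.prems finA by (meson finite_subset)
  then have finX: "finite ?X" using insert.hyps by simp
  have aX: "a \<notin> ?X" using insert by auto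
  have cardX: "card ?X + 1 \<le> D" using insert finX aX by simp
  have IH: "R (m_map \<phi>) = (\<Sum>\<psi>\<in>ext T \<phi> ?X. R (m_map \<psi>))"
    using insert cardX by (intro insert.IH) auto
  let ?f = "\<lambda>(\<psi>, i). \<psi>(a \<mapsto> i)"
  have eq: "ext T \<phi> (dom \<phi> \<union> insert a S) = ?f ` (ext T \<phi> ?X \<times> T)"
  proof
    show "?f ` (ext T \<phi> ?X \<times> T) \<subseteq> ext T \<phi> (dom \<phi> \<union> insert a S)"
    proof clarify
      fix \<psi> i assume p: "\<psi> \<in> ext T \<phi> ?X" "i \<in> T"
      then have "\<psi> a = None" using aX by (auto simp: ext_def)
      then show "\<psi>(a \<mapsto> i) \<in> ext T \<phi> (dom \<phi> \<union> insert a S)"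
        using p aX by (auto simp: ext_def)
    qed
    show "ext T \<phi> (dom \<phi> \<union> insert a S) \<subseteq> ?f ` (ext T \<phi> ?X \<times> T)"
    proof
      fix \<psi>' assume p: "\<psi>' \<in> ext T \<phi> (dom \<phi> \<union> insert a S)"
      then have d: "dom \<psi>' = insert a ?X" and r: "ran \<psi>' \<subseteq> T" and re: "\<psi>' |` dom \<phi> = \<phi>"
        by (auto simp: ext_def)
      have "\<psi>' a \<noteq> None" using d by auto
      then have "\<psi>' = ?f (\<psi>' |` ?X, the (\<psi>' a))"
        using d by (auto simp: fun_eq_iff restrict_map_def dom_def)
      moreover have "\<psi>' |` ?X \<in> ext T \<phi> ?X"
      proof -
        have "dom (\<psi>' |` ?X) = ?X" using d by auto
        moreover have "ran (\<psi>' |` ?X) \<subseteq> T" using r by (auto simp: ran_def restrict_map_def)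
        moreover have "(\<psi>' |` ?X) |` dom \<phi> = \<phi>" using re by (simp add: Int_absorb2)
        ultimately show ?thesis by (simp add: ext_def)
      qed
      moreover have "the (\<psi>' a) \<in> T" using d r by (intro the_in_ran) auto
      ultimately show "\<psi>' \<in> ?f ` (ext T \<phi> ?X \<times> T)" by blast
    qed
  qed
  have inj: "inj_on ?f (ext T \<phi> ?X \<times> T)"
  proof (rule inj_onI, clarify)
    fix \<psi> i \<psi>2 i2
    assume p: "\<psi> \<in> ext T \<phi> ?X" "\<psi>2 \<in> ext T \<phi> ?X" "\<psi>(a \<mapsto> i) = \<psi>2(a \<mapsto> i2)"
    then have "i = i2" by (metis fun_upd_same option.inject)
    moreover have "\<psi> = \<psi>2"
    proof
      fix x show "\<psi> x = \<psi>2 x"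
      proof (cases "x = a")
        case True
        have "dom \<psi> = ?X" "dom \<psi>2 = ?X" using p by (auto simp: ext_def)
        then have "\<psi> a = None" "\<psi>2 a = None" using aX by (metis domIff)+
        with True show ?thesis by simp
      next
        case False then show ?thesis using fun_cong[OF p(3), of x] by simp
      qed
    qed
    ultimately show "\<psi> = \<psi>2 \<and> i = i2" by simp
  qed
  have step: "(\<Sum>i\<in>T. R (m_map (\<psi>(a \<mapsto> i)))) = R (m_map \<psi>)" if p: "\<psi> \<in> ext T \<phi> ?X" for \<psi>
  proof -
    obtain xs where xs: "distinct xs" "set xs = ?X" using finite_distinct_list[OF finX] by blast
    have d: "dom \<psi> = ?X" and r: "ran \<psi> \<subseteq> T" using p by (auto simp: ext_def)
    have m1: "m_map \<psi> = mon (pairs \<psi> xs)" using xs d by (intro m_map_mon) auto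
    have m2: "m_map (\<psi>(a \<mapsto> i)) = mon (pairs \<psi> xs @ [(a, i)])" for i
    proof -
      have "m_map (\<psi>(a \<mapsto> i)) = mon (pairs (\<psi>(a \<mapsto> i)) (xs @ [a]))"
        using xs d aX by (intro m_map_mon) auto
      also have "pairs (\<psi>(a \<mapsto> i)) (xs @ [a]) = pairs \<psi> xs @ [(a, i)]"
        using xs aX by (auto simp: pairs_def)
      finally show ?thesis .
    qed
    have "set (pairs \<psi> xs) \<subseteq> V" using xs d r insert by (intro pairs_in) auto
    moreover have "length (pairs \<psi> xs) \<le> D - 1"
      using xs cardX by (simp add: pairs_def distinct_card[symmetric])
    moreover have "a \<in> A" using insert by auto
    ultimately show ?thesis unfolding m1 m2 by (rule sum_split)
  qed
  have "(\<Sum>\<psi>\<in>ext T \<phi> (dom \<phi> \<union> insert a S). R (m_map \<psi>)) = (\<Sum>x\<in>ext T \<phi> ?X \<times> T. R (m_map (?f x)))"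
    unfolding eq by (rule sum.reindex[OF inj, unfolded o_def])
  also have "\<dots> = (\<Sum>\<psi>\<in>ext T \<phi> ?X. \<Sum>i\<in>T. R (m_map (\<psi>(a \<mapsto> i))))"
    by (simp add: sum.cartesian_product split_def)
  also have "\<dots> = (\<Sum>\<psi>\<in>ext T \<phi> ?X. R (m_map \<psi>))"
    using step by (rule sum.cong[OF refl])
  finally show ?case using IH by simp
qed

lemma zero_prop_map:
  assumes "dom \<psi> \<subseteq> A" "ran \<psi> \<subseteq> T" "card (dom \<psi>) \<le> D" "Y \<subseteq> dom \<psi>" "R (m_map (\<psi> |` Y)) = 0"
  shows "R (m_map \<psi>) = 0"
proof -
  have fin: "finite (dom \<psi>)" using finite_subset[OF assms(1) finA] .
  obtain ws where ws: "distinct ws" "set ws = Y" using finite_distinct_list[OF finite_subset[OF assms(4) fin]] by blast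
  obtain vs where vs: "distinct vs" "set vs = dom \<psi> - Y" using finite_distinct_list[OF finite_Diff[OF fin]] by blast
  have "m_map \<psi> = mon (pairs \<psi> (vs @ ws))"
    using vs ws assms by (intro m_map_mon) auto
  also have "\<dots> = mon (pairs \<psi> vs @ pairs \<psi> ws)" by (simp add: pairs_def)
  finally have m1: "m_map \<psi> = mon (pairs \<psi> vs @ pairs \<psi> ws)" .
  have "(m_map (\<psi> |` Y) :: ('a \<times> 't, 'f) mpoly) = mon (pairs (\<psi> |` Y) ws)"
    using ws assms by (intro m_map_mon) auto
  also have "pairs (\<psi> |` Y) ws = pairs \<psi> ws" using ws by (intro pairs_cong) auto
  finally have m2: "R (mon (pairs \<psi> ws)) = 0" using assms by simp
  have "card (dom \<psi>) = length vs + length ws"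
  proof -
    have "dom \<psi> = set (vs @ ws)" using vs ws assms by auto
    moreover have "distinct (vs @ ws)" using vs ws by auto
    ultimately show ?thesis by (metis distinct_card length_append)
  qed
  then have "length (pairs \<psi> vs) + length (pairs \<psi> ws) \<le> D" using assms by (simp add: pairs_def)
  moreover have "set (pairs \<psi> vs) \<union> set (pairs \<psi> ws) \<subseteq> V"
    using vs ws assms pairs_in[of vs \<psi>] pairs_in[of ws \<psi>] by auto
  ultimately show ?thesis unfolding m1 using zero_prop m2 by blast
qed

lemma nonhom_zero:
  assumes "dom \<psi> \<subseteq> A" "ran \<psi> \<subseteq> T" "card (dom \<psi>) \<le> D" "\<psi> \<notin> Hom_sub sig A RA (dom \<psi>) T RT"
  shows "R (m_map \<psi>) = 0"
proof -
  obtain \<Gamma> t where G: "\<Gamma> \<in> sig" "t \<in> RA \<Gamma>" "set t \<subseteq> dom \<psi>" "map (\<lambda>a. the (\<psi> a)) t \<notin> RT \<Gamma>"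
    using assms(4) assms(2) unfolding Hom_sub_def by blast
  have dt: "distinct t" and lt: "length t = ar \<Gamma>"
    using A_inst G by (auto simp: is_instance_def is_structure_def)
  let ?c = "map (\<lambda>a. the (\<psi> a)) t"
  have cT: "set ?c \<subseteq> T" using G assms by (auto intro: the_in_ran)
  have "(\<Prod>j<ar \<Gamma>. Var (t ! j, ?c ! j)) \<in> P_enc sig ar A RA T RT"
    unfolding P_enc_def
    apply (rule UnI1, rule UnI2, rule CollectI, rule exI[of _ \<Gamma>], rule exI[of _ t], rule exI[of _ ?c])
    using G lt cT by simp
  then have z: "R (\<Prod>j<ar \<Gamma>. Var (t ! j, ?c ! j)) = 0" by (rule R_P)
  have "(m_map (\<psi> |` set t) :: ('a \<times> 't, 'f) mpoly) = mon (pairs (\<psi> |` set t) t)"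
    using dt G by (intro m_map_mon) auto
  also have "pairs (\<psi> |` set t) t = pairs \<psi> t" by (intro pairs_cong) auto
  also have "mon (pairs \<psi> t) = (\<Prod>j<ar \<Gamma>. Var (t ! j, ?c ! j))"
    unfolding mon_def pairs_def map_map o_def prod_list_nth lt[symmetric]
    by (rule prod.cong) auto
  finally have "R (m_map (\<psi> |` set t)) = 0" using z by (simp only:)
  then show ?thesis by (rule zero_prop_map[OF assms(1-3) G(3)])
qed

abbreviation "\<kappa> \<equiv> kappa_R sig A RA T RT R"

lemma kappa_ext:
  assumes "X \<subseteq> A" "card X \<le> D" "Y \<subseteq> X" "\<phi> \<in> \<kappa> Y"
  shows "\<exists>\<psi>\<in>\<kappa> X. \<psi> |` Y = \<phi>"
proof -
  have fX: "finite X" using assms finA finite_subset by auto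
  have p: "dom \<phi> = Y" "ran \<phi> \<subseteq> T" "R (m_map \<phi>) \<noteq> 0"
    using assms by (auto simp: kappa_R_def Hom_sub_def)
  have XY: "dom \<phi> \<union> (X - Y) = X" using p assms by auto
  have "R (m_map \<phi>) = (\<Sum>\<psi>\<in>ext T \<phi> X. R (m_map \<psi>))"
    using ext_sum[of "X - Y" \<phi>] p assms fX XY by auto
  with p obtain \<psi> where q: "\<psi> \<in> ext T \<phi> X" "R (m_map \<psi>) \<noteq> 0"
    by (metis (mono_tags, lifting) sum.neutral)
  then have q2: "dom \<psi> = X" "ran \<psi> \<subseteq> T" "\<psi> |` Y = \<phi>" using p by (auto simp: ext_def)
  have "\<psi> \<in> Hom_sub sig A RA X T RT"
    using nonhom_zero[of \<psi>] q q2 assms by auto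
  then show ?thesis using q q2 by (auto simp: kappa_R_def)
qed

lemma kappa_restr:
  assumes "X \<subseteq> A" "card X \<le> D" "Y \<subseteq> X" "\<psi> \<in> \<kappa> X"
  shows "\<psi> |` Y \<in> \<kappa> Y"
proof -
  have p: "dom \<psi> = X" "ran \<psi> \<subseteq> T" "R (m_map \<psi>) \<noteq> 0" "\<psi> \<in> Hom_sub sig A RA X T RT"
    using assms by (auto simp: kappa_R_def Hom_sub_def)
  have "R (m_map (\<psi> |` Y)) \<noteq> 0" using zero_prop_map[of \<psi> Y] p assms by auto
  moreover have "\<psi> |` Y \<in> Hom_sub sig A RA Y T RT"
  proof -
    have "dom (\<psi> |` Y) = Y" using p assms by auto
    moreover have "ran (\<psi> |` Y) \<subseteq> T" using p by (auto simp: ran_def restrict_map_def)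
    moreover have "map (\<lambda>a. the ((\<psi> |` Y) a)) t \<in> RT \<Gamma>" if "\<Gamma> \<in> sig" "t \<in> RA \<Gamma>" "set t \<subseteq> Y" for \<Gamma> t
    proof -
      have "map (\<lambda>a. the ((\<psi> |` Y) a)) t = map (\<lambda>a. the (\<psi> a)) t" using that by auto
      moreover have "map (\<lambda>a. the (\<psi> a)) t \<in> RT \<Gamma>" using p(4) that assms unfolding Hom_sub_def by blast
      ultimately show ?thesis by metis
    qed
    ultimately show ?thesis unfolding Hom_sub_def by blast
  qed
  ultimately show ?thesis by (simp add: kappa_R_def)
qed

lemma kappa_empty: "Map.empty \<in> \<kappa> {}"
proof -
  have r: "R (m_map Map.empty) = 1" by (simp add: m_map_def R_one)
  then have "Map.empty \<in> Hom_sub sig A RA (dom Map.empty) T RT"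
    using nonhom_zero[of Map.empty] by auto
  then show ?thesis using r by (simp add: kappa_R_def)
qed

lemma kappa_nonempty: "X \<subseteq> A \<Longrightarrow> card X \<le> D \<Longrightarrow> \<kappa> X \<noteq> {}"
  using kappa_ext[of X "{}" Map.empty] kappa_empty by auto

lemma part1: "k \<le> D \<Longrightarrow> k_consistent sig A RA T RT k \<kappa> \<and> (\<forall>X. X \<subseteq> A \<and> card X \<le> k \<longrightarrow> \<kappa> X \<noteq> {})"
  unfolding k_consistent_def
  using kappa_ext kappa_restr kappa_nonempty
  by (auto simp: kappa_R_def)

end


definition ti :: "'f::field \<Rightarrow> int" where "ti c = (THE i. of_int i = c)"

definition intc :: "('v, 'f::field) mpoly \<Rightarrow> bool" where
  "intc p \<longleftrightarrow> (\<forall>m. Poly_Mapping.lookup p m \<in> \<int>)"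

lemma of_int_inj_char0:
  assumes c: "CHAR('f::field) = 0" and e: "(of_int a :: 'f) = of_int b"
  shows "a = b"
proof (rule ccontr)
  assume "a \<noteq> b"
  then have "nat \<bar>a - b\<bar> > 0" by simp
  then have ne: "(of_nat (nat \<bar>a - b\<bar>) :: 'f) \<noteq> 0" using c unfolding CHAR_eq0_iff by blast
  have z: "(of_int (a - b) :: 'f) = 0" using e by simp
  have "(of_nat (nat \<bar>a - b\<bar>) :: 'f) = of_int \<bar>a - b\<bar>" by simp
  also have "\<dots> = 0" using z by (cases "a - b \<ge> 0") (auto simp: abs_if)
  finally show False using ne by simp
qed

lemma ti_of_int: "CHAR('f::field) = 0 \<Longrightarrow> ti (of_int z :: 'f) = z"
  unfolding ti_def by (rule the_equality) (auto dest: of_int_inj_char0)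

lemma ti_int: "CHAR('f::field) = 0 \<Longrightarrow> (c::'f) \<in> \<int> \<Longrightarrow> of_int (ti c) = c"
  by (auto elim!: Ints_cases simp: ti_of_int)

lemma lookup_toint: "CHAR('f::field) = 0 \<Longrightarrow>
   Poly_Mapping.lookup (to_int_poly (p :: ('v, 'f) mpoly)) m = ti (Poly_Mapping.lookup p m)"
  using ti_of_int[of 0, where 'f='f]
  by (simp add: to_int_poly_def Poly_Mapping.map.rep_eq when_def ti_def)

lemma keys_toint: "Poly_Mapping.keys (to_int_poly p) \<subseteq> Poly_Mapping.keys p"
  by (auto simp: in_keys_iff to_int_poly_def Poly_Mapping.map.rep_eq when_def)

lemma toint_polys_in: "p \<in> polys_in V \<Longrightarrow> to_int_poly p \<in> polys_in V"
  using keys_toint unfolding polys_in_def by blast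

lemma toint_sum:
  assumes c: "CHAR('f::field) = 0" and f: "finite I" and i: "\<And>i. i \<in> I \<Longrightarrow> intc (q i :: ('v, 'f) mpoly)"
  shows "to_int_poly (sum q I) = (\<Sum>i\<in>I. to_int_poly (q i))"
proof (rule poly_mapping_eqI)
  fix m
  have "(\<Sum>i\<in>I. Poly_Mapping.lookup (q i) m) = (\<Sum>i\<in>I. of_int (ti (Poly_Mapping.lookup (q i) m)))"
    using i c by (intro sum.cong refl) (simp add: ti_int intc_def)
  also have "\<dots> = of_int (\<Sum>i\<in>I. ti (Poly_Mapping.lookup (q i) m))" by simp
  finally have eq: "(\<Sum>i\<in>I. Poly_Mapping.lookup (q i) m) = of_int (\<Sum>i\<in>I. ti (Poly_Mapping.lookup (q i) m))" .
  have "ti (\<Sum>i\<in>I. Poly_Mapping.lookup (q i) m) = (\<Sum>i\<in>I. ti (Poly_Mapping.lookup (q i) m))"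
    by (simp only: eq ti_of_int[OF c])
  then show "Poly_Mapping.lookup (to_int_poly (sum q I)) m = Poly_Mapping.lookup (\<Sum>i\<in>I. to_int_poly (q i)) m"
    using c by (simp add: lookup_toint lookup_sum)
qed

lemma toint_one: "CHAR('f::field) = 0 \<Longrightarrow> to_int_poly (1 :: ('v, 'f) mpoly) = 1"
proof (rule poly_mapping_eqI)
  fix m assume c: "CHAR('f::field) = 0"
  have "ti (1::'f) = 1" using ti_of_int[OF c, of 1] by simp
  moreover have "ti (0::'f) = 0" using ti_of_int[OF c, of 0] by simp
  ultimately show "Poly_Mapping.lookup (to_int_poly (1 :: ('v, 'f) mpoly)) m = Poly_Mapping.lookup 1 m"
    using c by (simp add: lookup_toint lookup_one when_def)
qed

lemma h_sum:
  assumes h: "Z_linear_on V h" and q: "\<And>i. i \<in> I \<Longrightarrow> q i \<in> polys_in V"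
  shows "h (sum q I) = (\<Sum>i\<in>I. h (q i))"
  using q
proof (induction I rule: infinite_finite_induct)
  case (infinite A)
  have "h (0 + 0) = h 0 + h 0" using h polys_in_zero unfolding Z_linear_on_def by blast
  then show ?case using infinite by simp
next
  case empty
  have "h (0 + 0) = h 0 + h 0" using h polys_in_zero unfolding Z_linear_on_def by blast
  then show ?case by simp
next
  case (insert x F)
  have "h (q x + sum q F) = h (q x) + h (sum q F)"
    using h insert.prems polys_in_sum[of F q] unfolding Z_linear_on_def by auto
  then show ?case using insert by simp
qed

context prctx
begin

lemma kappa_sum:
  assumes "X \<subseteq> A" "card X \<le> D" "Y \<subseteq> X" "\<psi> \<in> \<kappa> Y"
  shows "R (m_map \<psi>) = (\<Sum>\<phi>\<in>{\<phi>\<in>\<kappa> X. \<phi> |` Y = \<psi>}. R (m_map \<phi>))"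
    and "finite {\<phi>\<in>\<kappa> X. \<phi> |` Y = \<psi>}"
proof -
  have fX: "finite X" using finite_subset[OF assms(1) finA] .
  have p: "dom \<psi> = Y" "ran \<psi> \<subseteq> T"
    using assms by (auto simp: kappa_R_def Hom_sub_def)
  have XY: "dom \<psi> \<union> (X - Y) = X" using p assms by auto
  have e: "R (m_map \<psi>) = (\<Sum>\<phi>\<in>ext T \<psi> X. R (m_map \<phi>))"
    using ext_sum[of "X - Y" \<psi>] p assms fX XY by auto
  have fe: "finite (ext T \<psi> X)" using fin_ext[OF fX finT] .
  have sub: "{\<phi>\<in>\<kappa> X. \<phi> |` Y = \<psi>} \<subseteq> ext T \<psi> X"
    using p by (auto simp: ext_def kappa_R_def Hom_sub_def)
  then show "finite {\<phi>\<in>\<kappa> X. \<phi> |` Y = \<psi>}" using fe finite_subset by blast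
  have "(\<Sum>\<phi>\<in>ext T \<psi> X. R (m_map \<phi>)) = (\<Sum>\<phi>\<in>{\<phi>\<in>\<kappa> X. \<phi> |` Y = \<psi>}. R (m_map \<phi>))"
  proof (rule sum.mono_neutral_right[OF fe sub], rule ballI)
    fix \<phi> assume \<phi>: "\<phi> \<in> ext T \<psi> X - {\<phi>\<in>\<kappa> X. \<phi> |` Y = \<psi>}"
    then have q: "dom \<phi> = X" "ran \<phi> \<subseteq> T" "\<phi> |` Y = \<psi>" using p by (auto simp: ext_def)
    show "R (m_map \<phi>) = 0"
    proof (cases "\<phi> \<in> Hom_sub sig A RA X T RT")
      case True then show ?thesis using \<phi> q by (auto simp: kappa_R_def)
    next
      case False then show ?thesis using nonhom_zero[of \<phi>] q assms by auto
    qed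
  qed
  with e show "R (m_map \<psi>) = (\<Sum>\<phi>\<in>{\<phi>\<in>\<kappa> X. \<phi> |` Y = \<psi>}. R (m_map \<phi>))" by simp
qed

lemma kappa_dom: "\<phi> \<in> \<kappa> X \<Longrightarrow> dom \<phi> = X \<and> ran \<phi> \<subseteq> T"
  by (auto simp: kappa_R_def Hom_sub_def)

lemma intc_R:
  assumes "integral_op V R" "dom \<phi> \<subseteq> A" "ran \<phi> \<subseteq> T"
  shows "intc (R (m_map \<phi>))" and "R (m_map \<phi>) \<in> polys_in V"
proof -
  have fin: "finite (dom \<phi>)" using finite_subset[OF assms(2) finA] .
  obtain xs where xs: "distinct xs" "set xs = dom \<phi>" using finite_distinct_list[OF fin] by blast
  have m: "m_map \<phi> = mon (pairs \<phi> xs)" using xs by (intro m_map_mon) auto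
  have s: "set (pairs \<phi> xs) \<subseteq> V" using xs assms by (intro pairs_in) auto
  then show "R (m_map \<phi>) \<in> polys_in V" unfolding m by (intro R_closed mon_polys_in)
  have k: "Poly_Mapping.keys (expv (pairs \<phi> xs)) \<subseteq> V" using s by (simp add: keys_expv)
  show "intc (R (m_map \<phi>))"
    unfolding intc_def
  proof
    fix mm
    show "Poly_Mapping.lookup (R (m_map \<phi>)) mm \<in> \<int>"
    proof (cases "mm \<in> Poly_Mapping.keys (R (m_map \<phi>))")
      case True then show ?thesis using assms(1) k unfolding integral_op_def m mon_expv by blast
    next
      case False then show ?thesis by (simp add: in_keys_iff)
    qed
  qed
qed

lemma part2:
  assumes c: "CHAR('f) = 0" and ig: "integral_op V R" and h: "Z_linear_on V h" "h 1 = 1" and k: "k \<le> D"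
  shows "L_solution sig A RA T RT k \<kappa> (\<lambda>X \<phi>. h (to_int_poly (R (m_map \<phi>))))"
proof -
  have gen: "(\<Sum>\<phi>\<in>{\<phi>\<in>\<kappa> X. \<phi> |` Y = \<psi>}. h (to_int_poly (R (m_map \<phi>)))) = h (to_int_poly (R (m_map \<psi>)))"
    if a: "X \<subseteq> A" "card X \<le> D" "Y \<subseteq> X" "\<psi> \<in> \<kappa> Y" for X Y \<psi>
  proof -
    let ?S = "{\<phi>\<in>\<kappa> X. \<phi> |` Y = \<psi>}"
    have fs: "finite ?S" using kappa_sum(2)[OF a] .
    have dd: "\<phi> \<in> ?S \<Longrightarrow> dom \<phi> \<subseteq> A \<and> ran \<phi> \<subseteq> T" for \<phi> using kappa_dom[of \<phi> X] a by auto
    have "to_int_poly (R (m_map \<psi>)) = (\<Sum>\<phi>\<in>?S. to_int_poly (R (m_map \<phi>)))"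
      unfolding kappa_sum(1)[OF a] using c fs dd intc_R(1)[OF ig] by (intro toint_sum) auto
    moreover have "to_int_poly (R (m_map \<phi>)) \<in> polys_in V" if "\<phi> \<in> ?S" for \<phi>
    proof -
      from dd[OF that] have "dom \<phi> \<subseteq> A" "ran \<phi> \<subseteq> T" by auto
      then show ?thesis by (intro toint_polys_in intc_R(2)[OF ig])
    qed
    ultimately have "h (to_int_poly (R (m_map \<psi>))) = (\<Sum>\<phi>\<in>?S. h (to_int_poly (R (m_map \<phi>))))"
      using h_sum[OF h(1), of ?S "\<lambda>\<phi>. to_int_poly (R (m_map \<phi>))"] by (simp only:)
    then show ?thesis by (simp only:)
  qed
  show ?thesis
    unfolding L_solution_def
  proof (intro conjI allI impI ballI)
    fix X assume X: "X \<subseteq> A \<and> card X \<le> k"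
    have "(\<Sum>\<phi>\<in>{\<phi>\<in>\<kappa> X. \<phi> |` {} = Map.empty}. h (to_int_poly (R (m_map \<phi>)))) = h (to_int_poly (R (m_map Map.empty)))"
      using X k kappa_empty by (intro gen) auto
    moreover have "h (to_int_poly (R (m_map Map.empty))) = 1"
      using h c by (simp add: m_map_def R_one toint_one)
    ultimately show "(\<Sum>\<phi>\<in>\<kappa> X. h (to_int_poly (R (m_map \<phi>)))) = 1" by simp
  next
    fix X Y \<psi> assume a: "X \<subseteq> A \<and> card X \<le> k \<and> Y \<subseteq> X" "\<psi> \<in> \<kappa> Y"
    then show "(\<Sum>\<phi>\<in>{\<phi>\<in>\<kappa> X. \<phi> |` Y = \<psi>}. h (to_int_poly (R (m_map \<phi>)))) = h (to_int_poly (R (m_map \<psi>)))"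
      using k by (intro gen) auto
  qed
qed

end

lemma h0_linear: "Z_linear_on V (\<lambda>p. Poly_Mapping.lookup p 0)"
  unfolding Z_linear_on_def
  by (auto simp: lookup_add Const_def mult_map_scale_conv_mult[symmetric] Poly_Mapping.map.rep_eq when_def)

theorem mainTheorem4:
  fixes sig :: "'s set" and ar :: "'s \<Rightarrow> nat"
    and A :: "'a set" and RA :: "'s \<Rightarrow> 'a list set"
    and T :: "'t set" and RT :: "'s \<Rightarrow> 't list set"
    and D :: nat
    and R :: "('a \<times> 't, 'f::field) mpoly \<Rightarrow> ('a \<times> 't, 'f) mpoly"
  assumes T_struct: "is_structure sig ar T RT"
    and A_inst: "is_instance sig ar A RA"
    and D_pos: "D \<ge> 1"
    and R_pr: "pseudo_reduction D (A \<times> T) (P_enc sig ar A RA T RT) R"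
  shows "(\<forall>k\<le>D. k_consistent sig A RA T RT k (kappa_R sig A RA T RT R) \<and>
                (\<forall>X. X \<subseteq> A \<and> card X \<le> k \<longrightarrow> kappa_R sig A RA T RT R X \<noteq> {}))
       \<and> (CHAR('f) = 0 \<and> integral_op (A \<times> T) R \<longrightarrow>
            (\<forall>h. Z_linear_on (A \<times> T) h \<and> h 1 = 1 \<longrightarrow>
               (\<forall>k\<le>D. L_solution sig A RA T RT k (kappa_R sig A RA T RT R)
                         (\<lambda>X \<phi>. h (to_int_poly (R (m_map \<phi>)))))))
       \<and> (CHAR('f) = 0 \<and>
            (\<exists>R'::('a \<times> 't, 'f) mpoly \<Rightarrow> ('a \<times> 't, 'f) mpoly.
                pseudo_reduction D (A \<times> T) (P_enc sig ar A RA T RT) R' \<and> integral_op (A \<times> T) R')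
            \<longrightarrow> (\<forall>k\<le>D. Zaffine_accepts sig A RA T RT k))"
proof -
  interpret r: prctx sig ar A RA T RT D R
    using assms by unfold_locales
  have p3: "\<forall>k\<le>D. Zaffine_accepts sig A RA T RT k"
    if c: "CHAR('f) = 0" and ex: "\<exists>R'::('a \<times> 't, 'f) mpoly \<Rightarrow> ('a \<times> 't, 'f) mpoly.
                pseudo_reduction D (A \<times> T) (P_enc sig ar A RA T RT) R' \<and> integral_op (A \<times> T) R'"
  proof -
    obtain R' :: "('a \<times> 't, 'f) mpoly \<Rightarrow> ('a \<times> 't, 'f) mpoly"
      where R': "pseudo_reduction D (A \<times> T) (P_enc sig ar A RA T RT) R'" "integral_op (A \<times> T) R'"
      using ex by blast
    interpret r2: prctx sig ar A RA T RT D R'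
      using assms R' by unfold_locales
    have h1: "Poly_Mapping.lookup (1 :: ('a \<times> 't, int) mpoly) 0 = 1" by simp
    show ?thesis
      unfolding Zaffine_accepts_def
      using r2.part1 r2.part2[OF c R'(2) h0_linear h1] by blast
  qed
  show ?thesis
    using r.part1 r.part2 p3 by blast
qed

end
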